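(* Let $g_1,\dots,g_N\in\mathbb{C}^K$ be nonzero vectors and $w_1,\dots,w_N\ge0$. Define for $\mathcal{S}\subseteq\mathcal{N}=\{1,\dots,N\}$ $$\mathrm{WFP}(\mathcal{S})=\sum_{i,j\in\mathcal{S}}w_iw_j\frac{|\langle g_i,g_j\rangle|^2}{\|g_i\|_2^2\|g_j\|_2^2},\qquad \mathrm{WFC}(\mathcal{T})=\mathrm{WFP}(\mathcal{N})-\mathrm{WFP}(\mathcal{N}\setminus\mathcal{T}).$$ Then $\mathrm{WFC}$ is normalized ($\mathrm{WFC}(\varnothing)=0$), monotone non-decreasing ($\mathcal{S}_1\subseteq\mathcal{S}_2\Rightarrow\mathrm{WFC}(\mathcal{S}_1)\le\mathrm{WFC}(\mathcal{S}_2)$), and submodular ($\mathrm{WFC}(\mathcal{S}_2\cup\{j\})-\mathrm{WFC}(\mathcal{S}_2)\le\mathrm{WFC}(\mathcal{S}_1\cup\{j\})-\mathrm{WFC}(\mathcal{S}_1)$ for all $\mathcal{S}_1\subseteq\mathcal{S}_2\subseteq\mathcal{N}$ and $j\in\mathcal{N}\setminus\mathcal{S}_2$).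
   Context: In the paper $g_i=\nabla_{\mathbf{x}}y_i$ is the gradient of the $i$-th measurement with respect to the unknown parameter vector (the $i$-th row of the measurement matrix in the linear case), and $w_i=\phi(\sigma_i)\in[0,1]$ is a weight depending on the noise level of sensor $i$. $\langle\cdot,\cdot\rangle$ is the standard inner product on $\mathbb{C}^K$. *)

theory Defs
  imports "HOL-Analysis.Analysis"
begin

definition cinner :: "complex ^ 'k \<Rightarrow> complex ^ 'k \<Rightarrow> complex" where
  "cinner x y = (\<Sum>k\<in>UNIV. x $ k * cnj (y $ k))"

definition WFP :: "(nat \<Rightarrow> complex ^ 'k) \<Rightarrow> (nat \<Rightarrow> real) \<Rightarrow> nat set \<Rightarrow> real" where
  "WFP g w S = (\<Sum>i\<in>S. \<Sum>j\<in>S. w i * w j *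
      (cmod (cinner (g i) (g j)))\<^sup>2 / ((norm (g i))\<^sup>2 * (norm (g j))\<^sup>2))"

definition WFC :: "nat \<Rightarrow> (nat \<Rightarrow> complex ^ 'k) \<Rightarrow> (nat \<Rightarrow> real) \<Rightarrow> nat set \<Rightarrow> real" where
  "WFC N g w T = WFP g w {1..N} - WFP g w ({1..N} - T)"

end

theory Submission
  imports Defs
begin

lemma F_insert:
  fixes c :: "nat \<Rightarrow> nat \<Rightarrow> real"
  assumes "finite B" "j \<notin> B"
  shows "(\<Sum>i\<in>insert j B. \<Sum>k\<in>insert j B. c i k) - (\<Sum>i\<in>B. \<Sum>k\<in>B. c i k)
         = c j j + (\<Sum>i\<in>B. c j i + c i j)"
  using assms by (simp add: sum.distrib)

lemma F_mono:
  fixes c :: "nat \<Rightarrow> nat \<Rightarrow> real"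
  assumes "finite A" "B \<subseteq> A" "\<And>i k. i \<in> A \<Longrightarrow> k \<in> A \<Longrightarrow> c i k \<ge> 0"
  shows "(\<Sum>i\<in>B. \<Sum>k\<in>B. c i k) \<le> (\<Sum>i\<in>A. \<Sum>k\<in>A. c i k)"
proof -
  have "(\<Sum>i\<in>B. \<Sum>k\<in>B. c i k) \<le> (\<Sum>i\<in>B. \<Sum>k\<in>A. c i k)"
    by (rule sum_mono, rule sum_mono2) (use assms finite_subset in auto)
  also have "\<dots> \<le> (\<Sum>i\<in>A. \<Sum>k\<in>A. c i k)"
    by (rule sum_mono2) (use assms in \<open>auto intro!: sum_nonneg\<close>)
  finally show ?thesis .
qed

theorem mainTheorem6:
  fixes N :: nat and g :: "nat \<Rightarrow> complex ^ 'k" and w :: "nat \<Rightarrow> real"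
  assumes g_nz: "\<And>i. i \<in> {1..N} \<Longrightarrow> g i \<noteq> 0"
    and w_nn: "\<And>i. i \<in> {1..N} \<Longrightarrow> w i \<ge> 0"
  shows "WFC N g w {} = 0
    \<and> (\<forall>S1 S2. S1 \<subseteq> S2 \<and> S2 \<subseteq> {1..N} \<longrightarrow> WFC N g w S1 \<le> WFC N g w S2)
    \<and> (\<forall>S1 S2 j. S1 \<subseteq> S2 \<and> S2 \<subseteq> {1..N} \<and> j \<in> {1..N} - S2 \<longrightarrow>
         WFC N g w (S2 \<union> {j}) - WFC N g w S2 \<le> WFC N g w (S1 \<union> {j}) - WFC N g w S1)"
proof -
  define c where "c i k = w i * w k *
      (cmod (cinner (g i) (g k)))\<^sup>2 / ((norm (g i))\<^sup>2 * (norm (g k))\<^sup>2)" for i k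
  have P: "WFP g w A = (\<Sum>i\<in>A. \<Sum>k\<in>A. c i k)" for A
    unfolding WFP_def c_def by simp
  have cnn: "c i k \<ge> 0" if "i \<in> {1..N}" "k \<in> {1..N}" for i k
    unfolding c_def using w_nn[OF that(1)] w_nn[OF that(2)] by simp
  have W: "WFC N g w T = (\<Sum>i\<in>{1..N}. \<Sum>k\<in>{1..N}. c i k) - (\<Sum>i\<in>{1..N}-T. \<Sum>k\<in>{1..N}-T. c i k)" for T
    unfolding WFC_def P ..
  have part2: "WFC N g w S1 \<le> WFC N g w S2" if "S1 \<subseteq> S2" for S1 S2
    unfolding W using F_mono[of "{1..N} - S1" "{1..N} - S2" c] that cnn by auto
  have part3: "WFC N g w (S2 \<union> {j}) - WFC N g w S2 \<le> WFC N g w (S1 \<union> {j}) - WFC N g w S1"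
    if "S1 \<subseteq> S2" "j \<in> {1..N} - S2" for S1 S2 j
  proof -
    have d: "WFC N g w (S \<union> {j}) - WFC N g w S = c j j + (\<Sum>i\<in>{1..N}-S-{j}. c j i + c i j)"
      if "j \<in> {1..N} - S" for S
    proof -
      have e: "{1..N} - S = insert j ({1..N}-S-{j})" using that by auto
      have "{1..N} - (S \<union> {j}) = {1..N}-S-{j}" by auto
      then show ?thesis unfolding W
        by (subst e, subst (2) e, subst F_insert[symmetric]) auto
    qed
    have "j \<in> {1..N} - S1" using that by auto
    have "(\<Sum>i\<in>{1..N}-S2-{j}. c j i + c i j) \<le> (\<Sum>i\<in>{1..N}-S1-{j}. c j i + c i j)"
      by (rule sum_mono2) (use that cnn in \<open>auto intro!: add_nonneg_nonneg\<close>)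
    then show ?thesis using d[OF that(2)] d[OF \<open>j \<in> {1..N} - S1\<close>] by linarith
  qed
  show ?thesis using part2 part3 by (auto simp: WFC_def)
qed

end
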